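(* Let $\mathcal O,K,k,\nu,\pi$ be as in the context. Let $\alpha\in\mathcal O((X^{-1}))$ with $\mathrm{LC}(\alpha)\in\mathcal O^*$ and $\operatorname{ord}(\alpha)\le0$, and let $\gamma=\bar\alpha\in k((X^{-1}))$. Assume $\alpha\notin K(X)$ and $\gamma\notin k(X)$. Let $(p_n,q_n)$ ($n\ge0$) be the canonical convergents of $\alpha$ over $K$ and $(u_m,v_m)$ ($m\ge0$) those of $\gamma$ over $k$. Then for every $n\ge0$, the pair $(\pi^{-\nu(q_n)}p_n,\pi^{-\nu(q_n)}q_n)$ lies in $\mathcal O[X]^2$, and its reduction $(\tilde p_n,\tilde q_n)\in k[X]^2$ satisfies $\tilde q_n\ne0$ and $\operatorname{ord}(\tilde p_n-\gamma\tilde q_n)>\deg\tilde q_n$. Moreover there are a unique $\lambda(n)\in\mathbb N_0$ and some $h_n\in k[X]\setminus\{0\}$ with $(\tilde p_n,\tilde q_n)=h_n\cdot(u_{\lambda(n)},v_{\lambda(n)})$. The map $\lambda:\mathbb N_0\to\mathbb N_0$ is non-decreasing and surjective, and if $n=\min\lambda^{-1}(m)$ then $\deg v_m=\deg q_n$.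
   Context: $\mathcal O$ is a discrete valuation ring with fraction field $K$, uniformiser $\pi$, valuation $\nu$ with $\nu(\pi)=1$, residue field $k$ of characteristic $\ne2$; bars denote coefficientwise reduction modulo the maximal ideal. For a polynomial or Laurent series $u=\sum u_nX^n$ over $K$, $\nu(u)=\inf_n\nu(u_n)$ (Gauss valuation). $F((X^{-1}))$ is the field of Laurent series $\sum_{n\le N}u_nX^n$ with $\operatorname{ord}(\sum_{n\le N}u_nX^n)=-N$ if $u_N\ne0$, and $\mathrm{LC}$ denotes the leading coefficient; $\mathcal O((X^{-1}))$ consists of those with all coefficients in $\mathcal O$. $\lfloor\alpha\rfloor$ is the unique polynomial with $\operatorname{ord}(\alpha-\lfloor\alpha\rfloor)>0$. Continued fraction: $\alpha_0=\alpha$, $\alpha_{n+1}=1/(\alpha_n-\lfloor\alpha_n\rfloor)$, partial quotients $a_n=\lfloor\alpha_n\rfloor$; canonical convergents $p_{-1}=1,q_{-1}=0,p_0=a_0,q_0=1$, $p_n=a_np_{n-1}+p_{n-2}$, $q_n=a_nq_{n-1}+q_{n-2}$. *)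

theory Defs
  imports "HOL-Computational_Algebra.Computational_Algebra"
begin

text \<open>Laurent series in X^{-1} over a field F are represented as formal Laurent
series in the variable T = X^{-1} (type 'a fls).  The coefficient of X^n is the
coefficient of T^(-n).  Hence ord (in the paper's sense) is fls_subdegree and the
leading coefficient is the coefficient at T^(ord).\<close>

definition poly_fls :: "'a::comm_ring_1 poly \<Rightarrow> 'a fls" where
  "poly_fls p = (\<Sum>i\<le>degree p. fls_const (coeff p i) * fls_X_inv ^ i)"

text \<open>Polynomial part (floor): coefficients of X^i for i >= 0.\<close>
definition fls_floor :: "'a::comm_ring_1 fls \<Rightarrow> 'a poly" where
  "fls_floor f = fls_prpart f + [: (fls_nth f 0) :]"

definition fls_ord :: "'a::zero fls \<Rightarrow> int" where
  "fls_ord f = fls_subdegree f"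

definition fls_LC :: "'a::zero fls \<Rightarrow> 'a" where
  "fls_LC f = fls_nth f (fls_subdegree f)"

definition is_rational_fls :: "'a::field fls \<Rightarrow> bool" where
  "is_rational_fls f \<longleftrightarrow> (\<exists>p q. q \<noteq> 0 \<and> f * poly_fls q = poly_fls p)"

primrec cf_alpha :: "'a::field fls \<Rightarrow> nat \<Rightarrow> 'a fls" where
  "cf_alpha f 0 = f"
| "cf_alpha f (Suc n) = inverse (cf_alpha f n - poly_fls (fls_floor (cf_alpha f n)))"

definition cf_a :: "'a::field fls \<Rightarrow> nat \<Rightarrow> 'a poly" where
  "cf_a f n = fls_floor (cf_alpha f n)"

text \<open>Canonical convergents p_n, q_n for n >= 0 (with p_{-1} = 1, q_{-1} = 0).\<close>
fun cf_p :: "'a::field fls \<Rightarrow> nat \<Rightarrow> 'a poly" where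
  "cf_p f 0 = cf_a f 0"
| "cf_p f (Suc 0) = cf_a f 1 * cf_a f 0 + 1"
| "cf_p f (Suc (Suc n)) = cf_a f (Suc (Suc n)) * cf_p f (Suc n) + cf_p f n"

fun cf_q :: "'a::field fls \<Rightarrow> nat \<Rightarrow> 'a poly" where
  "cf_q f 0 = 1"
| "cf_q f (Suc 0) = cf_a f 1"
| "cf_q f (Suc (Suc n)) = cf_a f (Suc (Suc n)) * cf_q f (Suc n) + cf_q f n"

text \<open>Discrete valuation on a field K, given on nonzero elements (nu 0 = infinity
is handled by always excluding 0), normalised so that it is surjective onto Z
(a uniformiser pi has value 1).\<close>
definition discrete_valuation :: "('a::field \<Rightarrow> int) \<Rightarrow> bool" where
  "discrete_valuation \<nu> \<longleftrightarrow>
     (\<forall>x y. x \<noteq> 0 \<longrightarrow> y \<noteq> 0 \<longrightarrow> \<nu> (x * y) = \<nu> x + \<nu> y) \<and>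
     (\<forall>x y. x \<noteq> 0 \<longrightarrow> y \<noteq> 0 \<longrightarrow> x + y \<noteq> 0 \<longrightarrow> min (\<nu> x) (\<nu> y) \<le> \<nu> (x + y))"

definition val_ring :: "('a::field \<Rightarrow> int) \<Rightarrow> 'a set" where
  "val_ring \<nu> = {x. x = 0 \<or> 0 \<le> \<nu> x}"

definition max_ideal :: "('a::field \<Rightarrow> int) \<Rightarrow> 'a set" where
  "max_ideal \<nu> = {x. x = 0 \<or> 0 < \<nu> x}"

definition residue_map :: "('a::field \<Rightarrow> int) \<Rightarrow> ('a \<Rightarrow> 'b::field) \<Rightarrow> bool" where
  "residue_map \<nu> red \<longleftrightarrow>
     (\<forall>x\<in>val_ring \<nu>. \<forall>y\<in>val_ring \<nu>. red (x + y) = red x + red y \<and> red (x * y) = red x * red y) \<and>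
     red 1 = 1 \<and>
     (\<forall>x\<in>val_ring \<nu>. red x = 0 \<longleftrightarrow> x \<in> max_ideal \<nu>) \<and>
     red ` val_ring \<nu> = UNIV"

definition gauss_val :: "('a::field \<Rightarrow> int) \<Rightarrow> 'a poly \<Rightarrow> int" where
  "gauss_val \<nu> p = Min {\<nu> (coeff p i) | i. coeff p i \<noteq> 0}"

end

theory Submission
  imports Defs
begin

lemma poly_fls_nth: "fls_nth (poly_fls p) k = (if k \<le> 0 then coeff p (nat (-k)) else 0)"
proof -
  have "fls_nth (poly_fls p) k = (\<Sum>i\<le>degree p. coeff p i * (if k = - int i then 1 else 0))"
    by (simp add: poly_fls_def fls_nth_sum)
  also have "\<dots> = (\<Sum>i\<le>degree p. if i = nat (-k) \<and> k \<le> 0 then coeff p i else 0)"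
    by (intro sum.cong) auto
  also have "\<dots> = (if k \<le> 0 then coeff p (nat (-k)) else 0)"
    by (auto simp: sum.delta coeff_eq_0)
  finally show ?thesis .
qed

lemma poly_fls_eq_iff: "poly_fls p = poly_fls q \<longleftrightarrow> p = q"
proof
  assume "poly_fls p = poly_fls q"
  hence "\<And>i. fls_nth (poly_fls p) (- int i) = fls_nth (poly_fls q) (- int i)" by simp
  thus "p = q" by (intro poly_eqI) (simp add: poly_fls_nth)
qed simp

lemma poly_fls_0 [simp]: "poly_fls 0 = 0"
  by (intro fls_eqI) (simp add: poly_fls_nth)
lemma poly_fls_1 [simp]: "poly_fls 1 = 1"
  by (intro fls_eqI) (simp add: poly_fls_nth)
lemma poly_fls_add [simp]: "poly_fls (p + q) = poly_fls p + poly_fls q"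
  by (intro fls_eqI) (simp add: poly_fls_nth)
lemma poly_fls_diff [simp]: "poly_fls (p - q) = poly_fls p - poly_fls (q::'a::comm_ring_1 poly)"
  by (intro fls_eqI) (simp add: poly_fls_nth)
lemma poly_fls_minus [simp]: "poly_fls (- p) = - poly_fls (p::'a::comm_ring_1 poly)"
  by (intro fls_eqI) (simp add: poly_fls_nth)
lemma poly_fls_smult [simp]: "poly_fls (smult c p) = fls_const c * poly_fls p"
  by (intro fls_eqI) (simp add: poly_fls_nth)
lemma poly_fls_pCons: "poly_fls (pCons a p) = fls_const a + fls_X_inv * poly_fls p"
  apply (intro fls_eqI)
  apply (auto simp: poly_fls_nth fls_X_inv_times_conv_shift coeff_pCons split: nat.split)
  subgoal for x x2 by (rule arg_cong[of _ _ "coeff p"]) linarith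
  done

lemma poly_fls_mult [simp]: "poly_fls (p * q) = poly_fls p * poly_fls (q::'a::comm_ring_1 poly)"
proof (induction p)
  case 0 show ?case by simp
next
  case (pCons a p)
  have "poly_fls (pCons a p * q) = poly_fls (smult a q + pCons 0 (p * q))" by simp
  also have "\<dots> = fls_const a * poly_fls q + fls_X_inv * (poly_fls p * poly_fls q)"
    by (simp add: poly_fls_pCons pCons.IH)
  also have "\<dots> = poly_fls (pCons a p) * poly_fls q"
    by (simp add: poly_fls_pCons algebra_simps)
  finally show ?case .
qed

lemma poly_fls_nz [simp]: "poly_fls p = 0 \<longleftrightarrow> p = 0"
  using poly_fls_eq_iff[of p 0] by simp

lemma poly_fls_subdegree: "p \<noteq> 0 \<Longrightarrow> fls_subdegree (poly_fls p) = - int (degree p)"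
  by (rule fls_subdegree_eqI) (auto simp: poly_fls_nth coeff_eq_0)

lemma poly_fls_sum_D: "degree p \<le> D \<Longrightarrow> poly_fls p = (\<Sum>i\<le>D. fls_const (coeff p i) * fls_X_inv ^ i)"
proof (intro fls_eqI)
  fix k assume D: "degree p \<le> D"
  have "fls_nth (\<Sum>i\<le>D. fls_const (coeff p i) * fls_X_inv ^ i) k = (\<Sum>i\<le>D. coeff p i * (if k = - int i then 1 else 0))"
    by (simp add: fls_nth_sum)
  also have "\<dots> = (\<Sum>i\<le>D. if i = nat (-k) \<and> k \<le> 0 then coeff p i else 0)"
    by (intro sum.cong) auto
  also have "\<dots> = (if k \<le> 0 then coeff p (nat (-k)) else 0)"
    using D by (auto simp: coeff_eq_0)
  finally show "fls_nth (poly_fls p) k = fls_nth (\<Sum>i\<le>D. fls_const (coeff p i) * fls_X_inv ^ i) k"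
    by (simp add: poly_fls_nth)
qed

lemma mult_poly_fls_nth:
  assumes "degree p \<le> D"
  shows "fls_nth (f * poly_fls p) k = (\<Sum>i\<le>D. coeff p i * fls_nth f (k + int i))"
proof -
  have "f * poly_fls p = (\<Sum>i\<le>D. fls_const (coeff p i) * (fls_X_inv ^ i * f))"
    by (simp add: poly_fls_sum_D[OF assms] sum_distrib_left algebra_simps)
  thus ?thesis by (simp add: fls_nth_sum fls_X_inv_power_times_conv_shift)
qed

lemma coeff_fls_floor: "coeff (fls_floor x) i = fls_nth x (- int i)"
  by (cases i) (simp_all add: fls_floor_def)

lemma poly_fls_floor_nth: "fls_nth (poly_fls (fls_floor x)) k = (if k \<le> 0 then fls_nth x k else 0)"
  by (simp add: poly_fls_nth coeff_fls_floor)

lemma frac_nth: "fls_nth (x - poly_fls (fls_floor x)) k = (if k \<le> 0 then 0 else fls_nth x k)"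
  by (simp add: poly_fls_floor_nth)

lemma frac_pos: "x - poly_fls (fls_floor x) \<noteq> 0 \<Longrightarrow> 0 < fls_subdegree (x - poly_fls (fls_floor x))"
  using nth_fls_subdegree_nonzero[of "x - poly_fls (fls_floor x)"]
  by (simp only: frac_nth) (auto split: if_splits)

lemma degree_floor:
  assumes "x \<noteq> 0" "fls_subdegree x \<le> 0"
  shows "int (degree (fls_floor x)) = - fls_subdegree x"
proof -
  let ?s = "fls_subdegree x"
  have c: "coeff (fls_floor x) (nat (- ?s)) \<noteq> 0"
    using assms by (simp add: coeff_fls_floor)
  have "\<forall>i>nat (- ?s). coeff (fls_floor x) i = 0"
    by (auto simp: coeff_fls_floor intro: nth_less_subdegree_zero)
  hence "degree (fls_floor x) \<le> nat (- ?s)"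
    by (meson degree_le)
  moreover have "nat (- ?s) \<le> degree (fls_floor x)" using c le_degree by blast
  ultimately show ?thesis using assms by simp
qed

lemma fls_subdegree_inverse:
  fixes x :: "'a::field fls"
  assumes "x \<noteq> 0" shows "fls_subdegree (inverse x) = - fls_subdegree x"
proof -
  have "fls_subdegree (x * inverse x) = 0" using assms by simp
  moreover have "inverse x \<noteq> 0" using assms by simp
  ultimately show ?thesis using assms by (simp del: fls_subdegree_mult add: fls_subdegree_mult[of x "inverse x"])
qed

definition cf_beta :: "'a::field fls \<Rightarrow> nat \<Rightarrow> 'a fls" where
  "cf_beta f n = cf_alpha f n - poly_fls (cf_a f n)"

definition cf_r :: "'a::field fls \<Rightarrow> nat \<Rightarrow> 'a fls" where
  "cf_r f n = poly_fls (cf_p f n) - f * poly_fls (cf_q f n)"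

lemma cf_alpha_Suc': "cf_alpha f (Suc n) = inverse (cf_beta f n)"
  by (simp add: cf_beta_def cf_a_def)

lemma beta_pos: "cf_beta f n \<noteq> 0 \<Longrightarrow> 0 < fls_subdegree (cf_beta f n)"
  using frac_pos[of "cf_alpha f n"] unfolding cf_beta_def cf_a_def by blast

lemma deg_a_Suc:
  assumes "cf_beta f n \<noteq> 0"
  shows "int (degree (cf_a f (Suc n))) = fls_subdegree (cf_beta f n)"
proof -
  have "cf_alpha f (Suc n) \<noteq> 0" using assms by (simp add: cf_alpha_Suc' del: cf_alpha.simps)
  moreover have "fls_subdegree (cf_alpha f (Suc n)) = - fls_subdegree (cf_beta f n)"
    using assms by (simp add: cf_alpha_Suc' fls_subdegree_inverse del: cf_alpha.simps)
  ultimately show ?thesis using beta_pos[OF assms] degree_floor[of "cf_alpha f (Suc n)"]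
    by (simp add: cf_a_def del: cf_alpha.simps)
qed

lemma deg_a_Suc_ge1: "cf_beta f n \<noteq> 0 \<Longrightarrow> 1 \<le> degree (cf_a f (Suc n))"
  using deg_a_Suc[of f n] beta_pos[of f n] by linarith

lemma beta_key:
  assumes "cf_beta f n \<noteq> 0"
  shows "cf_beta f n * cf_beta f (Suc n) = 1 - cf_beta f n * poly_fls (cf_a f (Suc n))"
proof -
  have "cf_beta f (Suc n) = inverse (cf_beta f n) - poly_fls (cf_a f (Suc n))"
    by (simp add: cf_beta_def cf_alpha_Suc' del: cf_alpha.simps)
  hence "cf_beta f n * (cf_beta f (Suc n) + poly_fls (cf_a f (Suc n))) = 1" using assms by simp
  thus ?thesis by (simp add: algebra_simps)
qed

lemma r_formula:
  "(\<forall>i<n. cf_beta f i \<noteq> 0) \<Longrightarrow> cf_r f n = (-1)^(Suc n) * (\<Prod>i\<le>n. cf_beta f i)"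
proof (induction n rule: less_induct)
  case (less n)
  show ?case
  proof (cases n)
    case 0 thus ?thesis by (simp add: cf_r_def cf_beta_def cf_a_def)
  next
    case (Suc m)
    show ?thesis
    proof (cases m)
      case 0
      have b0: "cf_beta f 0 \<noteq> 0" using less.prems Suc 0 by auto
      have "cf_r f 1 = 1 - cf_beta f 0 * poly_fls (cf_a f 1)"
        by (simp add: cf_r_def cf_beta_def algebra_simps cf_a_def)
      also have "\<dots> = cf_beta f 0 * cf_beta f 1" using beta_key[OF b0] by simp
      finally show ?thesis using Suc 0 by simp
    next
      case (Suc k)
      have nk: "n = Suc (Suc k)" using Suc \<open>n = Suc m\<close> by simp
      have b: "cf_beta f (Suc k) \<noteq> 0" using less.prems nk by auto
      have IH1: "cf_r f k = (-1)^(Suc k) * (\<Prod>i\<le>k. cf_beta f i)"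
        using less nk by auto
      have IH2: "cf_r f (Suc k) = (-1)^(Suc (Suc k)) * (\<Prod>i\<le>Suc k. cf_beta f i)"
        using less nk by auto
      let ?A = "poly_fls (cf_a f (Suc (Suc k)))"
      let ?P = "\<Prod>i\<le>k. cf_beta f i"
      have "cf_r f n = ?A * cf_r f (Suc k) + cf_r f k"
        by (simp add: nk cf_r_def algebra_simps)
      also have "\<dots> = (-1)^(Suc k) * ?P * (1 - cf_beta f (Suc k) * ?A)"
        by (simp add: IH1 IH2 algebra_simps)
      also have "\<dots> = (-1)^(Suc k) * ?P * (cf_beta f (Suc k) * cf_beta f (Suc (Suc k)))"
        by (simp add: beta_key[OF b])
      also have "\<dots> = (-1)^(Suc n) * (\<Prod>i\<le>n. cf_beta f i)"
        by (simp add: nk mult.assoc)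
      finally show ?thesis .
    qed
  qed
qed

lemma cf_det: "cf_p f (Suc n) * cf_q f n - cf_p f n * cf_q f (Suc n) = (-1)^n"
proof (induction n rule: less_induct)
  case (less n)
  show ?case
  proof (cases n)
    case 0 thus ?thesis by (simp add: algebra_simps)
  next
    case (Suc m)
    have "cf_p f (Suc m) * cf_q f m - cf_p f m * cf_q f (Suc m) = (-1)^m" using less Suc by simp
    thus ?thesis using Suc by (simp add: algebra_simps)
  qed
qed

lemma deg_q:
  "(\<forall>i<n. cf_beta f i \<noteq> 0) \<Longrightarrow> cf_q f n \<noteq> 0 \<and> degree (cf_q f n) = (\<Sum>i<n. degree (cf_a f (Suc i)))"
proof (induction n rule: less_induct)
  case (less n)
  show ?case
  proof (cases n)
    case 0 thus ?thesis by simp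
  next
    case (Suc m)
    show ?thesis
    proof (cases m)
      case 0
      have "1 \<le> degree (cf_a f 1)" using deg_a_Suc_ge1[of f 0] less.prems Suc 0 by auto
      hence "cf_a f 1 \<noteq> 0" by auto
      thus ?thesis using Suc 0 by simp
    next
      case (Suc k)
      have nk: "n = Suc (Suc k)" using Suc \<open>n = Suc m\<close> by simp
      have b: "cf_beta f (Suc k) \<noteq> 0" using less.prems nk by auto
      have IH1: "cf_q f k \<noteq> 0 \<and> degree (cf_q f k) = (\<Sum>i<k. degree (cf_a f (Suc i)))"
        using less nk by auto
      have IH2: "cf_q f (Suc k) \<noteq> 0 \<and> degree (cf_q f (Suc k)) = (\<Sum>i<Suc k. degree (cf_a f (Suc i)))"
        using less nk by auto
      have a1: "1 \<le> degree (cf_a f (Suc (Suc k)))" using deg_a_Suc_ge1[OF b] .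
      hence anz: "cf_a f (Suc (Suc k)) \<noteq> 0" by auto
      have dm: "degree (cf_a f (Suc (Suc k)) * cf_q f (Suc k)) = degree (cf_a f (Suc (Suc k))) + degree (cf_q f (Suc k))"
        using anz IH2 by (simp add: degree_mult_eq)
      have lt: "degree (cf_q f k) < degree (cf_a f (Suc (Suc k)) * cf_q f (Suc k))"
        using dm a1 IH1 IH2 by simp
      have dd: "degree (cf_q f n) = degree (cf_a f (Suc (Suc k)) * cf_q f (Suc k))"
        using nk lt by (simp add: degree_add_eq_left)
      hence d: "degree (cf_q f n) = (\<Sum>i<n. degree (cf_a f (Suc i)))"
        using dm IH2 nk by simp
      have "cf_q f n \<noteq> 0" using dd lt by (metis degree_0 not_less0)
      thus ?thesis using d by simp
    qed
  qed
qed

lemma beta_nonzero: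
  assumes irr: "\<not> is_rational_fls f"
  shows "cf_beta f n \<noteq> 0"
proof (induction n rule: less_induct)
  case (less n)
  show ?case
  proof
    assume z: "cf_beta f n = 0"
    have all: "\<forall>i<n. cf_beta f i \<noteq> 0" using less by auto
    have "(\<Prod>i\<le>n. cf_beta f i) = 0" by (rule prod_zero) (use z in auto)
    hence "cf_r f n = 0" using r_formula[OF all] by simp
    hence "f * poly_fls (cf_q f n) = poly_fls (cf_p f n)" by (simp add: cf_r_def)
    moreover have "cf_q f n \<noteq> 0" using deg_q[OF all] by simp
    ultimately show False using irr unfolding is_rational_fls_def by blast
  qed
qed

context
  fixes f :: "'a::field fls"
  assumes irr: "\<not> is_rational_fls f"
begin

lemma all_beta: "\<forall>i<n. cf_beta f i \<noteq> 0"
  using beta_nonzero[OF irr] by blast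

lemma q_nz: "cf_q f n \<noteq> 0"
  using deg_q[OF all_beta] by blast

lemma deg_q_sum: "degree (cf_q f n) = (\<Sum>i<n. degree (cf_a f (Suc i)))"
  using deg_q[OF all_beta] by blast

lemma deg_q_Suc: "degree (cf_q f (Suc n)) = degree (cf_q f n) + degree (cf_a f (Suc n))"
  by (simp add: deg_q_sum)

lemma deg_q_lt: "degree (cf_q f n) < degree (cf_q f (Suc n))"
  using deg_q_Suc[of n] deg_a_Suc_ge1[OF beta_nonzero[OF irr, of n]] by simp

lemma deg_q_strict: "strict_mono (\<lambda>n. degree (cf_q f n))"
  unfolding strict_mono_Suc_iff using deg_q_lt by blast

lemma deg_q_0: "degree (cf_q f 0) = 0" by simp

lemma prod_beta: "(\<Prod>i\<le>n. cf_beta f i) \<noteq> 0 \<and>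
   fls_subdegree (\<Prod>i\<le>n. cf_beta f i) = (\<Sum>i\<le>n. fls_subdegree (cf_beta f i))"
proof (induction n)
  case 0 thus ?case using beta_nonzero[OF irr, of 0] by simp
next
  case (Suc n)
  thus ?case using beta_nonzero[OF irr, of "Suc n"] by (simp add: prod.atMost_Suc sum.atMost_Suc)
qed

lemma r_nz_ord: "cf_r f n \<noteq> 0 \<and> fls_subdegree (cf_r f n) = int (degree (cf_q f (Suc n)))"
proof -
  have r: "cf_r f n = (-1)^(Suc n) * (\<Prod>i\<le>n. cf_beta f i)" using r_formula[OF all_beta] .
  have s: "cf_r f n = (if even n then - (\<Prod>i\<le>n. cf_beta f i) else (\<Prod>i\<le>n. cf_beta f i))"
    using r by (cases "even n") (simp_all)
  have "(\<Sum>i\<le>n. fls_subdegree (cf_beta f i)) = (\<Sum>i<Suc n. int (degree (cf_a f (Suc i))))"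
    by (simp add: lessThan_Suc_atMost deg_a_Suc[OF beta_nonzero[OF irr]])
  also have "\<dots> = int (degree (cf_q f (Suc n)))" by (simp add: deg_q_sum)
  finally show ?thesis using prod_beta[of n] s by (cases "even n") simp_all
qed

lemma exists_bracket:
  fixes g :: "nat \<Rightarrow> nat"
  assumes sm: "strict_mono g" and d: "g 0 \<le> d"
  shows "\<exists>l. g l \<le> d \<and> d < g (Suc l)"
proof -
  have ex: "\<exists>l. d < g l" using strict_mono_imp_increasing[OF sm, of "Suc d"] by (metis Suc_le_eq)
  define L where "L = (LEAST l. d < g l)"
  have L1: "d < g L" unfolding L_def using ex by (rule LeastI_ex)
  have L0: "L \<noteq> 0" using L1 d by (metis leD)
  then obtain l where l: "L = Suc l" by (cases L) auto
  have "\<not> d < g l" using l L_def not_less_Least[of l "\<lambda>l. d < g l"] by simp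
  thus ?thesis using L1 l by (intro exI[of _ l]) simp
qed

lemma legendre:
  assumes qnz: "q \<noteq> 0"
    and ord: "int (degree q) < fls_subdegree (poly_fls p - f * poly_fls q)"
  shows "\<exists>l h. h \<noteq> 0 \<and> p = h * cf_p f l \<and> q = h * cf_q f l"
proof -
  obtain l where l1: "degree (cf_q f l) \<le> degree q" and l2: "degree q < degree (cf_q f (Suc l))"
    using exists_bracket[OF deg_q_strict, of "degree q"] by auto
  let ?E = "poly_fls p - f * poly_fls q"
  let ?u = "cf_p f l" and ?v = "cf_q f l"
  have Enz: "?E \<noteq> 0" using ord by (auto)
  define D where "D = p * ?v - q * ?u"
  have PD: "poly_fls D = poly_fls ?v * ?E + (- (poly_fls q * cf_r f l))"
    by (simp add: D_def cf_r_def algebra_simps)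
  have D0: "D = 0"
  proof (rule ccontr)
    assume Dnz: "D \<noteq> 0"
    have vnz: "?v \<noteq> 0" using q_nz .
    have s1: "fls_subdegree (poly_fls ?v * ?E) > 0"
      using Enz vnz ord l1 by (simp add: poly_fls_subdegree)
    have s2: "fls_subdegree (- (poly_fls q * cf_r f l)) > 0"
      using r_nz_ord[of l] qnz l2 by (simp add: poly_fls_subdegree)
    have "fls_subdegree (poly_fls D) \<ge> min (fls_subdegree (poly_fls ?v * ?E)) (fls_subdegree (- (poly_fls q * cf_r f l)))"
      unfolding PD by (rule fls_plus_subdegree) (metis PD poly_fls_nz Dnz)
    hence "fls_subdegree (poly_fls D) > 0" using s1 s2 by linarith
    thus False using poly_fls_subdegree[OF Dnz] by simp
  qed
  hence pv: "p * ?v = q * ?u" by (simp add: D_def)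
  show ?thesis
  proof (cases l)
    case 0
    thus ?thesis using pv qnz by (intro exI[of _ 0] exI[of _ q]) (simp add: mult.commute)
  next
    case (Suc m)
    let ?e = "(-1::'a poly)^m"
    have det: "?u * cf_q f m - cf_p f m * ?v = ?e" using cf_det[of f m] Suc by simp
    have ee: "?e * ?e = 1" by (simp flip: power_add)
    define h where "h = ?e * (p * cf_q f m - q * cf_p f m)"
    have hu: "h * ?u = p"
    proof -
      have "h * ?u = ?e * (p * cf_q f m * ?u - (q * ?u) * cf_p f m)" by (simp add: h_def algebra_simps)
      also have "\<dots> = ?e * p * (?u * cf_q f m - cf_p f m * ?v)" by (simp add: pv[symmetric] algebra_simps)
      also have "\<dots> = p" by (simp add: det ee mult.commute mult.left_commute)
      finally show ?thesis .
    qed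
    have hv: "h * ?v = q"
    proof -
      have "h * ?v = ?e * ((p * ?v) * cf_q f m - q * cf_p f m * ?v)" by (simp add: h_def algebra_simps)
      also have "\<dots> = ?e * q * (?u * cf_q f m - cf_p f m * ?v)" by (simp add: pv algebra_simps)
      also have "\<dots> = q" by (simp add: det ee mult.commute mult.left_commute)
      finally show ?thesis .
    qed
    have "h \<noteq> 0" using hv qnz by auto
    thus ?thesis using hu hv by metis
  qed
qed

end

lemma lambda_exists:
  fixes g :: "'b::field fls" and tp tq :: "nat \<Rightarrow> 'b poly" and dq :: "nat \<Rightarrow> nat"
  assumes irr: "\<not> is_rational_fls g"
    and sm: "strict_mono dq" and d0: "dq 0 = 0"
    and tqnz: "\<And>n. tq n \<noteq> 0"
    and degle: "\<And>n. degree (tq n) \<le> dq n"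
    and ordge: "\<And>n. int (dq (Suc n)) \<le> fls_subdegree (poly_fls (tp n) - g * poly_fls (tq n))"
  shows "\<exists>lam :: nat \<Rightarrow> nat.
     (\<forall>n. (\<exists>h. h \<noteq> 0 \<and> tp n = h * cf_p g (lam n) \<and> tq n = h * cf_q g (lam n)) \<and>
          (\<forall>l. (\<exists>h. h \<noteq> 0 \<and> tp n = h * cf_p g l \<and> tq n = h * cf_q g l) \<longrightarrow> l = lam n)) \<and>
     mono lam \<and> surj lam \<and>
     (\<forall>m n. n = (LEAST j. lam j = m) \<longrightarrow> degree (cf_q g m) = dq n)"
proof -
  define V where "V l = degree (cf_q g l)" for l
  have Vsm: "strict_mono V" unfolding V_def by (rule deg_q_strict[OF irr])
  have V0: "V 0 = 0" by (simp add: V_def)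
  define Pr where "Pr n l \<longleftrightarrow> (\<exists>h. h \<noteq> 0 \<and> tp n = h * cf_p g l \<and> tq n = h * cf_q g l)" for n l
  have br: "V l \<le> dq n \<and> dq (Suc n) \<le> V (Suc l)" if Prnl: "Pr n l" for n l
  proof -
    obtain h where h: "h \<noteq> 0" "tp n = h * cf_p g l" "tq n = h * cf_q g l"
      using Prnl unfolding Pr_def by blast
    have vnz: "cf_q g l \<noteq> 0" using q_nz[OF irr] .
    have "degree (tq n) = degree h + V l" unfolding h(3) V_def using h(1) vnz by (rule degree_mult_eq)
    hence A: "V l \<le> dq n" using degle[of n] by simp
    have E: "poly_fls (tp n) - g * poly_fls (tq n) = poly_fls h * cf_r g l"
      unfolding h(2,3) cf_r_def by (simp add: algebra_simps)
    have rr: "cf_r g l \<noteq> 0" "fls_subdegree (cf_r g l) = int (V (Suc l))"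
      using r_nz_ord[OF irr, of l] unfolding V_def by auto
    have "fls_subdegree (poly_fls h * cf_r g l) = - int (degree h) + int (V (Suc l))"
      using rr h(1) by (simp add: poly_fls_subdegree)
    hence "dq (Suc n) \<le> V (Suc l)" using ordge[of n] unfolding E by linarith
    with A show ?thesis by simp
  qed
  have ex: "\<exists>l. Pr n l" for n
  proof -
    have "dq n < dq (Suc n)" using sm by (simp add: strict_mono_def)
    hence "int (degree (tq n)) < fls_subdegree (poly_fls (tp n) - g * poly_fls (tq n))"
      using degle[of n] ordge[of n] by linarith
    from legendre[OF irr tqnz this] show ?thesis by (auto simp: Pr_def)
  qed
  have uniq: "l = l'" if "V l \<le> d" "d < V (Suc l)" "V l' \<le> d" "d < V (Suc l')" for l l' d
  proof (rule ccontr)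
    assume "l \<noteq> l'"
    hence "Suc l \<le> l' \<or> Suc l' \<le> l" by auto
    thus False
    proof
      assume "Suc l \<le> l'"
      hence "V (Suc l) \<le> V l'" using strict_mono_less_eq[OF Vsm] by blast
      thus False using that by linarith
    next
      assume "Suc l' \<le> l"
      hence "V (Suc l') \<le> V l" using strict_mono_less_eq[OF Vsm] by blast
      thus False using that by linarith
    qed
  qed
  define lam where "lam n = (SOME l. Pr n l)" for n
  have Plam: "Pr n (lam n)" for n unfolding lam_def using ex someI_ex by metis
  have B: "V (lam n) \<le> dq n \<and> dq (Suc n) \<le> V (Suc (lam n))" for n using br[OF Plam] .
  have dqlt: "dq n < dq (Suc n)" for n using sm by (simp add: strict_mono_def)
  have P1: "\<forall>l. Pr n l \<longrightarrow> l = lam n" for n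
  proof (intro allI impI)
    fix l assume "Pr n l"
    from br[OF this] B[of n] dqlt[of n] show "l = lam n"
      by (intro uniq[of l "dq n" "lam n"]) auto
  qed
  have mono: "mono lam"
  proof (rule monoI, rule ccontr)
    fix n n' :: nat assume nn: "n \<le> n'" and "\<not> lam n \<le> lam n'"
    hence "Suc (lam n') \<le> lam n" by simp
    hence "V (Suc (lam n')) \<le> V (lam n)" using strict_mono_less_eq[OF Vsm] by simp
    moreover have "dq n \<le> dq n'" using nn strict_mono_less_eq[OF sm] by simp
    ultimately show False using B[of n] B[of n'] dqlt[of n'] by linarith
  qed
  have main: "lam (LEAST j. V m \<le> dq j) = m \<and> dq (LEAST j. V m \<le> dq j) = V m \<and>
              (\<forall>j < (LEAST j. V m \<le> dq j). lam j < m)" for m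
  proof -
    define n where "n = (LEAST j. V m \<le> dq j)"
    have exj: "\<exists>j. V m \<le> dq j" using strict_mono_imp_increasing[OF sm] by blast
    have n1: "V m \<le> dq n" unfolding n_def using exj by (rule LeastI_ex)
    have lt: "lam j < m" if "j < n" for j
    proof -
      have "\<not> V m \<le> dq j" using that n_def not_less_Least by blast
      hence "V (lam j) < V m" using B[of j] by linarith
      thus ?thesis using strict_mono_less[OF Vsm] by blast
    qed
    have n2: "dq n \<le> V m"
    proof (cases n)
      case 0 thus ?thesis using d0 by simp
    next
      case (Suc j)
      have "Suc (lam j) \<le> m" using lt[of j] Suc by simp
      hence "V (Suc (lam j)) \<le> V m" using strict_mono_less_eq[OF Vsm] by simp
      thus ?thesis using B[of j] Suc by simp
    qed
    have eq: "dq n = V m" using n1 n2 by simp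
    have "lam n = m"
    proof (rule uniq[of "lam n" "dq n" m])
      show "V (lam n) \<le> dq n" "dq n < V (Suc (lam n))" using B[of n] dqlt[of n] by auto
      show "V m \<le> dq n" using eq by simp
      show "dq n < V (Suc m)" using eq strict_monoD[OF Vsm, of m "Suc m"] by simp
    qed
    thus ?thesis using eq lt n_def by simp
  qed
  show ?thesis
  proof (intro exI[of _ lam] conjI allI impI)
    fix n show "\<exists>h. h \<noteq> 0 \<and> tp n = h * cf_p g (lam n) \<and> tq n = h * cf_q g (lam n)"
      using Plam[of n] by (simp add: Pr_def)
  next
    fix n l assume "\<exists>h. h \<noteq> 0 \<and> tp n = h * cf_p g l \<and> tq n = h * cf_q g l"
    thus "l = lam n" using P1[of n] by (simp add: Pr_def)
  next
    show "mono lam" by (rule mono)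
  next
    show "surj lam"
    proof (rule surjI)
      fix m show "lam (LEAST j. V m \<le> dq j) = m" using main[of m] by blast
    qed
  next
    fix m n assume n: "n = (LEAST j. lam j = m)"
    have "(LEAST j. lam j = m) = (LEAST j. V m \<le> dq j)"
    proof (rule Least_equality)
      show "lam (LEAST j. V m \<le> dq j) = m" using main by blast
      fix y assume "lam y = m" thus "(LEAST j. V m \<le> dq j) \<le> y" using main[of m] by (metis not_le less_irrefl)
    qed
    thus "degree (cf_q g m) = dq n" using main[of m] n by (simp add: V_def)
  qed
qed

context
  fixes \<nu> :: "'a::field \<Rightarrow> int" and red :: "'a \<Rightarrow> 'b::field"
  assumes val: "discrete_valuation \<nu>" and res: "residue_map \<nu> red"
begin

lemma nu_mult: "x \<noteq> 0 \<Longrightarrow> y \<noteq> 0 \<Longrightarrow> \<nu> (x * y) = \<nu> x + \<nu> y"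
  using val by (simp add: discrete_valuation_def)

lemma nu_add: "x \<noteq> 0 \<Longrightarrow> y \<noteq> 0 \<Longrightarrow> x + y \<noteq> 0 \<Longrightarrow> min (\<nu> x) (\<nu> y) \<le> \<nu> (x + y)"
  using val by (simp add: discrete_valuation_def)

lemma nu_1: "\<nu> 1 = 0"
  using nu_mult[of 1 1] by simp

lemma nu_m1: "\<nu> (-1) = 0"
  using nu_mult[of "-1" "-1"] nu_1 by simp

lemma nu_uminus: "x \<noteq> 0 \<Longrightarrow> \<nu> (- x) = \<nu> x"
  using nu_mult[of "-1" x] nu_m1 by simp

lemma nu_inverse: "x \<noteq> 0 \<Longrightarrow> \<nu> (inverse x) = - \<nu> x"
  using nu_mult[of x "inverse x"] nu_1 by simp

lemma nu_power: "x \<noteq> 0 \<Longrightarrow> \<nu> (x ^ k) = int k * \<nu> x"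
  by (induction k) (simp_all add: nu_1 nu_mult algebra_simps)

lemma nu_powi: "x \<noteq> 0 \<Longrightarrow> \<nu> (x powi z) = z * \<nu> x"
  by (cases "z \<ge> 0") (simp_all add: power_int_def nu_power nu_inverse)

lemma vr_0 [simp]: "0 \<in> val_ring \<nu>" by (simp add: val_ring_def)

lemma vr_add: "x \<in> val_ring \<nu> \<Longrightarrow> y \<in> val_ring \<nu> \<Longrightarrow> x + y \<in> val_ring \<nu>"
  unfolding val_ring_def using nu_add[of x y] by fastforce

lemma vr_mult: "x \<in> val_ring \<nu> \<Longrightarrow> y \<in> val_ring \<nu> \<Longrightarrow> x * y \<in> val_ring \<nu>"
  unfolding val_ring_def using nu_mult[of x y] by fastforce

lemma vr_uminus: "x \<in> val_ring \<nu> \<Longrightarrow> - x \<in> val_ring \<nu>"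
  unfolding val_ring_def using nu_uminus[of x] by fastforce

lemma vr_diff: "x \<in> val_ring \<nu> \<Longrightarrow> y \<in> val_ring \<nu> \<Longrightarrow> x - y \<in> val_ring \<nu>"
  using vr_add[OF _ vr_uminus[of y], of x] by simp

lemma red_add: "x \<in> val_ring \<nu> \<Longrightarrow> y \<in> val_ring \<nu> \<Longrightarrow> red (x + y) = red x + red y"
  using res by (simp add: residue_map_def)

lemma red_mult: "x \<in> val_ring \<nu> \<Longrightarrow> y \<in> val_ring \<nu> \<Longrightarrow> red (x * y) = red x * red y"
  using res by (simp add: residue_map_def)

lemma red_0 [simp]: "red 0 = 0"
proof -
  have "red 0 = red 0 + red 0" using red_add[of 0 0] by simp
  thus ?thesis by (metis add_cancel_right_right)
qed

lemma red_diff: "x \<in> val_ring \<nu> \<Longrightarrow> y \<in> val_ring \<nu> \<Longrightarrow> red (x - y) = red x - red y"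
  using red_add[OF vr_diff[of x y], of y] by (simp add: algebra_simps)

lemma red_nz: "x \<noteq> 0 \<Longrightarrow> \<nu> x = 0 \<Longrightarrow> red x \<noteq> 0"
proof -
  assume "x \<noteq> 0" "\<nu> x = 0"
  hence "x \<in> val_ring \<nu>" "x \<notin> max_ideal \<nu>" by (auto simp: val_ring_def max_ideal_def)
  thus ?thesis using res by (simp add: residue_map_def)
qed

lemma red_sum:
  "finite A \<Longrightarrow> (\<And>i. i \<in> A \<Longrightarrow> x i \<in> val_ring \<nu>) \<Longrightarrow>
    (\<Sum>i\<in>A. x i) \<in> val_ring \<nu> \<and> red (\<Sum>i\<in>A. x i) = (\<Sum>i\<in>A. red (x i))"
proof (induction A rule: finite_induct)
  case empty thus ?case by simp
next
  case (insert a A)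
  thus ?case by (simp add: vr_add red_add)
qed

lemma gauss_val_props:
  fixes q :: "'a poly"
  assumes "q \<noteq> 0"
  shows "\<exists>i0. coeff q i0 \<noteq> 0 \<and> \<nu> (coeff q i0) = gauss_val \<nu> q \<and>
          (\<forall>i. coeff q i \<noteq> 0 \<longrightarrow> gauss_val \<nu> q \<le> \<nu> (coeff q i))"
proof -
  let ?S = "{\<nu> (coeff q i) | i. coeff q i \<noteq> 0}"
  have "?S \<subseteq> (\<lambda>i. \<nu> (coeff q i)) ` {..degree q}"
    by (auto intro: le_degree)
  hence fin: "finite ?S" by (rule finite_subset) simp
  have ne: "?S \<noteq> {}" using assms leading_coeff_neq_0[of q] by blast
  have "Min ?S \<in> ?S" using fin ne by (rule Min_in)
  then obtain i0 where i0: "coeff q i0 \<noteq> 0" "\<nu> (coeff q i0) = Min ?S" by auto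
  have "\<forall>i. coeff q i \<noteq> 0 \<longrightarrow> Min ?S \<le> \<nu> (coeff q i)"
    using fin by (auto intro: Min_le)
  thus ?thesis using i0 unfolding gauss_val_def by blast
qed

end

lemma per_n:
  fixes \<nu> :: "'a::field \<Rightarrow> int" and \<pi> :: 'a and red :: "'a \<Rightarrow> 'b::field"
    and \<alpha> :: "'a fls" and \<gamma> :: "'b fls" and n :: nat
  assumes val: "discrete_valuation \<nu>"
    and unif: "\<pi> \<noteq> 0" "\<nu> \<pi> = 1"
    and res: "residue_map \<nu> red"
    and alpha_O: "\<forall>n. fls_nth \<alpha> n \<in> val_ring \<nu>"
    and gamma_def: "\<forall>n. fls_nth \<gamma> n = red (fls_nth \<alpha> n)"
    and irr_alpha: "\<not> is_rational_fls \<alpha>"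
    and irr_gamma: "\<not> is_rational_fls \<gamma>"
  defines "c \<equiv> \<pi> powi (- gauss_val \<nu> (cf_q \<alpha> n))"
  defines "P \<equiv> smult c (cf_p \<alpha> n)" and "Q \<equiv> smult c (cf_q \<alpha> n)"
  shows "(\<forall>i. coeff P i \<in> val_ring \<nu>) \<and> (\<forall>i. coeff Q i \<in> val_ring \<nu>) \<and>
         map_poly red Q \<noteq> 0 \<and> degree (map_poly red Q) \<le> degree (cf_q \<alpha> n) \<and>
         int (degree (cf_q \<alpha> (Suc n))) \<le> fls_subdegree (poly_fls (map_poly red P) - \<gamma> * poly_fls (map_poly red Q))"
proof -
  let ?q = "cf_q \<alpha> n"
  let ?g = "gauss_val \<nu> ?q"
  have qnz: "?q \<noteq> 0" using q_nz[OF irr_alpha] .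
  have red0 [simp]: "red 0 = 0" by (rule red_0[OF val res])
  obtain i0 where i0: "coeff ?q i0 \<noteq> 0" "\<nu> (coeff ?q i0) = ?g"
    and gmin: "\<And>i. coeff ?q i \<noteq> 0 \<Longrightarrow> ?g \<le> \<nu> (coeff ?q i)"
    using gauss_val_props[OF val res qnz] by blast
  have cnz: "c \<noteq> 0" unfolding c_def using unif by simp
  have nuc: "\<nu> c = - ?g" unfolding c_def using nu_powi[OF val res unif(1)] unif by simp
  have QO: "\<forall>i. coeff Q i \<in> val_ring \<nu>"
  proof
    fix i
    show "coeff Q i \<in> val_ring \<nu>"
    proof (cases "coeff ?q i = 0")
      case True thus ?thesis by (simp add: Q_def val_ring_def)
    next
      case False
      have "\<nu> (c * coeff ?q i) = - ?g + \<nu> (coeff ?q i)" using nu_mult[OF val res cnz False] nuc by simp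
      thus ?thesis using gmin[OF False] by (simp add: Q_def val_ring_def)
    qed
  qed
  have Qi0: "coeff Q i0 \<noteq> 0" "\<nu> (coeff Q i0) = 0"
    using nu_mult[OF val res cnz i0(1)] nuc i0 cnz by (simp_all add: Q_def)
  define cr where "cr = poly_fls P - \<alpha> * poly_fls Q"
  have cr_eq: "cr = fls_const c * cf_r \<alpha> n"
    by (simp add: cr_def P_def Q_def cf_r_def algebra_simps)
  define d1 where "d1 = int (degree (cf_q \<alpha> (Suc n)))"
  have d1pos: "0 < d1" using deg_q_lt[OF irr_alpha, of n] by (simp add: d1_def)
  have cr0: "fls_nth cr k = 0" if "k < d1" for k
  proof -
    have "k < fls_subdegree (cf_r \<alpha> n)" using r_nz_ord[OF irr_alpha, of n] that d1_def by simp
    hence "fls_nth (cf_r \<alpha> n) k = 0" by (meson fls_subdegree_leI not_le)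
    thus ?thesis by (simp add: cr_eq)
  qed
  have crnth: "fls_nth cr k = fls_nth (poly_fls P) k - (\<Sum>i\<le>degree Q. coeff Q i * fls_nth \<alpha> (k + int i))" for k
    by (simp add: cr_def mult_poly_fls_nth[of Q "degree Q"])
  have sumO: "(\<Sum>i\<le>degree Q. coeff Q i * fls_nth \<alpha> (k + int i)) \<in> val_ring \<nu> \<and>
     red (\<Sum>i\<le>degree Q. coeff Q i * fls_nth \<alpha> (k + int i)) = (\<Sum>i\<le>degree Q. red (coeff Q i * fls_nth \<alpha> (k + int i)))" for k
    using red_sum[OF val res, of "{..degree Q}" "\<lambda>i. coeff Q i * fls_nth \<alpha> (k + int i)"]
      vr_mult[OF val res] QO alpha_O by blast
  have PO: "\<forall>i. coeff P i \<in> val_ring \<nu>"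
  proof
    fix j
    have "fls_nth cr (- int j) = 0" using cr0 d1pos by simp
    hence "fls_nth (poly_fls P) (- int j) = (\<Sum>i\<le>degree Q. coeff Q i * fls_nth \<alpha> (- int j + int i))"
      using crnth[of "- int j"] by simp
    thus "coeff P j \<in> val_ring \<nu>" using sumO[of "- int j"] by (simp add: poly_fls_nth)
  qed
  have tqnz: "map_poly red Q \<noteq> 0"
  proof
    assume "map_poly red Q = 0"
    hence "coeff (map_poly red Q) i0 = 0" by simp
    thus False using red_nz[OF val res Qi0] by (simp add: coeff_map_poly)
  qed
  have degQ: "degree (map_poly red Q) \<le> degree Q" by (rule degree_le) (simp add: coeff_map_poly coeff_eq_0)
  have degtq: "degree (map_poly red Q) \<le> degree ?q"
    using degQ degree_smult_le[of c ?q] unfolding Q_def by linarith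
  define R where "R = poly_fls (map_poly red P) - \<gamma> * poly_fls (map_poly red Q)"
  have PnO: "fls_nth (poly_fls P) k \<in> val_ring \<nu>" for k
    using PO by (simp add: poly_fls_nth val_ring_def)
  have Rnth: "fls_nth R k = red (fls_nth cr k)" for k
  proof -
    have A: "fls_nth (poly_fls (map_poly red P)) k = red (fls_nth (poly_fls P) k)"
      by (simp add: poly_fls_nth coeff_map_poly)
    have "fls_nth (\<gamma> * poly_fls (map_poly red Q)) k = (\<Sum>i\<le>degree Q. coeff (map_poly red Q) i * fls_nth \<gamma> (k + int i))"
      by (rule mult_poly_fls_nth[OF degQ])
    also have "\<dots> = (\<Sum>i\<le>degree Q. red (coeff Q i * fls_nth \<alpha> (k + int i)))"
      by (intro sum.cong refl) (simp add: coeff_map_poly gamma_def red_mult[OF val res] QO alpha_O)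
    also have "\<dots> = red (\<Sum>i\<le>degree Q. coeff Q i * fls_nth \<alpha> (k + int i))" using sumO by simp
    finally have B: "fls_nth (\<gamma> * poly_fls (map_poly red Q)) k = red (\<Sum>i\<le>degree Q. coeff Q i * fls_nth \<alpha> (k + int i))" .
    show ?thesis unfolding R_def crnth using A B red_diff[OF val res PnO sumO[THEN conjunct1]] by simp
  qed
  have Rnz: "R \<noteq> 0"
  proof
    assume "R = 0"
    hence "\<gamma> * poly_fls (map_poly red Q) = poly_fls (map_poly red P)" by (simp add: R_def)
    thus False using irr_gamma tqnz unfolding is_rational_fls_def by blast
  qed
  have "d1 \<le> fls_subdegree R"
    by (rule fls_subdegree_geI[OF Rnz]) (simp add: Rnth cr0)
  thus ?thesis using PO QO tqnz degtq by (simp add: R_def d1_def)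
qed

theorem mainTheorem4:
  fixes \<nu> :: "'a::field \<Rightarrow> int" and \<pi> :: 'a and red :: "'a \<Rightarrow> 'b::field"
    and \<alpha> :: "'a fls" and \<gamma> :: "'b fls"
  assumes val: "discrete_valuation \<nu>"
    and unif: "\<pi> \<noteq> 0" "\<nu> \<pi> = 1"
    and res: "residue_map \<nu> red"
    and char: "(2::'b) \<noteq> 0"
    and alpha_O: "\<forall>n. fls_nth \<alpha> n \<in> val_ring \<nu>"
    and LC_unit: "fls_LC \<alpha> \<noteq> 0" "\<nu> (fls_LC \<alpha>) = 0"
    and ord_alpha: "fls_ord \<alpha> \<le> 0"
    and gamma_def: "\<forall>n. fls_nth \<gamma> n = red (fls_nth \<alpha> n)"
    and irr_alpha: "\<not> is_rational_fls \<alpha>"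
    and irr_gamma: "\<not> is_rational_fls \<gamma>"
  shows
    "(\<forall>n. let c = \<pi> powi (- gauss_val \<nu> (cf_q \<alpha> n));
             tp = map_poly red (smult c (cf_p \<alpha> n));
             tq = map_poly red (smult c (cf_q \<alpha> n))
         in (\<forall>i. coeff (smult c (cf_p \<alpha> n)) i \<in> val_ring \<nu>) \<and>
            (\<forall>i. coeff (smult c (cf_q \<alpha> n)) i \<in> val_ring \<nu>) \<and>
            tq \<noteq> 0 \<and>
            int (degree tq) < fls_ord (poly_fls tp - \<gamma> * poly_fls tq)) \<and>
     (\<exists>lam :: nat \<Rightarrow> nat.
        (\<forall>n. let c = \<pi> powi (- gauss_val \<nu> (cf_q \<alpha> n));
               tp = map_poly red (smult c (cf_p \<alpha> n));
               tq = map_poly red (smult c (cf_q \<alpha> n))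
           in (\<exists>h. h \<noteq> 0 \<and> tp = h * cf_p \<gamma> (lam n) \<and> tq = h * cf_q \<gamma> (lam n)) \<and>
              (\<forall>l. (\<exists>h. h \<noteq> 0 \<and> tp = h * cf_p \<gamma> l \<and> tq = h * cf_q \<gamma> l) \<longrightarrow> l = lam n)) \<and>
        mono lam \<and> surj lam \<and>
        (\<forall>m n. n = (LEAST j. lam j = m) \<longrightarrow> degree (cf_q \<gamma> m) = degree (cf_q \<alpha> n)))"
proof -
  define TP where "TP n = map_poly red (smult (\<pi> powi (- gauss_val \<nu> (cf_q \<alpha> n))) (cf_p \<alpha> n))" for n
  define TQ where "TQ n = map_poly red (smult (\<pi> powi (- gauss_val \<nu> (cf_q \<alpha> n))) (cf_q \<alpha> n))" for n
  have PN: "(\<forall>i. coeff (smult (\<pi> powi (- gauss_val \<nu> (cf_q \<alpha> n))) (cf_p \<alpha> n)) i \<in> val_ring \<nu>) \<and>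
         (\<forall>i. coeff (smult (\<pi> powi (- gauss_val \<nu> (cf_q \<alpha> n))) (cf_q \<alpha> n)) i \<in> val_ring \<nu>) \<and>
         TQ n \<noteq> 0 \<and> degree (TQ n) \<le> degree (cf_q \<alpha> n) \<and>
         int (degree (cf_q \<alpha> (Suc n))) \<le> fls_subdegree (poly_fls (TP n) - \<gamma> * poly_fls (TQ n))" for n
    unfolding TP_def TQ_def
    by (rule per_n[OF val unif res alpha_O gamma_def irr_alpha irr_gamma])
  have dlt: "degree (cf_q \<alpha> n) < degree (cf_q \<alpha> (Suc n))" for n by (rule deg_q_lt[OF irr_alpha])
  have part1: "\<forall>n. let c = \<pi> powi (- gauss_val \<nu> (cf_q \<alpha> n));
             tp = map_poly red (smult c (cf_p \<alpha> n));
             tq = map_poly red (smult c (cf_q \<alpha> n))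
         in (\<forall>i. coeff (smult c (cf_p \<alpha> n)) i \<in> val_ring \<nu>) \<and>
            (\<forall>i. coeff (smult c (cf_q \<alpha> n)) i \<in> val_ring \<nu>) \<and>
            tq \<noteq> 0 \<and>
            int (degree tq) < fls_ord (poly_fls tp - \<gamma> * poly_fls tq)"
  proof
    fix n
    have "int (degree (TQ n)) < fls_subdegree (poly_fls (TP n) - \<gamma> * poly_fls (TQ n))"
      using PN[of n] dlt[of n] by linarith
    thus "let c = \<pi> powi (- gauss_val \<nu> (cf_q \<alpha> n));
             tp = map_poly red (smult c (cf_p \<alpha> n));
             tq = map_poly red (smult c (cf_q \<alpha> n))
         in (\<forall>i. coeff (smult c (cf_p \<alpha> n)) i \<in> val_ring \<nu>) \<and>
            (\<forall>i. coeff (smult c (cf_q \<alpha> n)) i \<in> val_ring \<nu>) \<and>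
            tq \<noteq> 0 \<and>
            int (degree tq) < fls_ord (poly_fls tp - \<gamma> * poly_fls tq)"
      using PN[of n] unfolding Let_def fls_ord_def TP_def TQ_def by blast
  qed
  have lex: "\<exists>lam :: nat \<Rightarrow> nat.
     (\<forall>n. (\<exists>h. h \<noteq> 0 \<and> TP n = h * cf_p \<gamma> (lam n) \<and> TQ n = h * cf_q \<gamma> (lam n)) \<and>
          (\<forall>l. (\<exists>h. h \<noteq> 0 \<and> TP n = h * cf_p \<gamma> l \<and> TQ n = h * cf_q \<gamma> l) \<longrightarrow> l = lam n)) \<and>
     mono lam \<and> surj lam \<and>
     (\<forall>m n. n = (LEAST j. lam j = m) \<longrightarrow> degree (cf_q \<gamma> m) = degree (cf_q \<alpha> n))"
  proof (rule lambda_exists[OF irr_gamma deg_q_strict[OF irr_alpha] deg_q_0[OF irr_alpha], of TQ TP])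
    fix n
    show "TQ n \<noteq> 0" using PN[of n] by (elim conjE)
    show "degree (TQ n) \<le> degree (cf_q \<alpha> n)" using PN[of n] by (elim conjE)
    show "int (degree (cf_q \<alpha> (Suc n))) \<le> fls_subdegree (poly_fls (TP n) - \<gamma> * poly_fls (TQ n))"
      using PN[of n] by (elim conjE)
  qed
  show ?thesis
    apply (rule conjI[OF part1])
    unfolding Let_def TP_def[symmetric] TQ_def[symmetric]
    by (rule lex)
qed

end
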